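(* Let $\Gamma$ and $G$ be topological groups, $A$ a tree, and $\mathcal I$ a cellular $(\Gamma,A)$-groupoid. Then the map $\kappa\colon\mathrm{Rep}^G_{\mathrm{cell}}(\mathcal I)\to\overline{\mathrm{Rep}}^{\,G}_{\mathrm{cell}}(\mathcal I)$ is surjective.
   Context: A tree is a contractible graph (1-dimensional CW-complex). A $(\Gamma,A)$-groupoid: subspace $\mathcal I\subset\Gamma\times A$ with $\mathcal I\cap(\Gamma\times\{a\})=\tilde{\mathcal I}_a\times\{a\}$, $\tilde{\mathcal I}_a$ closed subgroups (identified with $\mathcal I_a$). $e(a)$: cell whose open cell contains $a$. Cellular: $\mathcal I_a=\mathcal I_b$ when $e(a)=e(b)$ (written $\mathcal I(e)$), and locally maximal (each $a$ and neighbourhood $B$ admit open $U$, $a\in U\subset B$, homotopy $\rho_t\colon U\to U$, $\rho_0=\mathrm{id}$, $\rho_1\equiv a$, $\mathcal I_u\subset\mathcal I_{\rho_t(u)}$); thus $\mathcal I(e)\subset\mathcal I(v)$ for a vertex $v$ of an edge $e$. A cellular representation is a continuous $\beta\colon\mathcal I\to G$, homomorphism on each $\mathcal I_a$, with $\beta_a=\beta_b$ when $e(a)=e(b)$; $\mathrm{Rep}^G_{\mathrm{cell}}(\mathcal I)$ is the set of these modulo conjugation by a constant $g\in G$. $\overline{\mathrm{Rep}}^{\,G}_{\mathrm{cell}}(\mathcal I)$: families $(b_e)$ over cells with $b_e$ a $G$-conjugacy class of continuous homomorphisms $\mathcal I(e)\to G$ and $b_e=b_v|_{\mathcal I(e)}$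 for each vertex $v$ of each edge $e$. $\kappa$ sends $\beta$ to $([\beta_e])_e$. *)

theory Defs
  imports "HOL-Analysis.Analysis" "HOL-Algebra.Group" "HOL-Library.FuncSet"
begin

definition topological_group :: "'g monoid \<Rightarrow> 'g topology \<Rightarrow> bool" where
  "topological_group Gr T \<longleftrightarrow>
     group Gr \<and> topspace T = carrier Gr \<and>
     continuous_map (prod_topology T T) T (\<lambda>p. fst p \<otimes>\<^bsub>Gr\<^esub> snd p) \<and>
     continuous_map T T (\<lambda>x. inv\<^bsub>Gr\<^esub> x)"

text \<open>A graph is given by a vertex set V, an edge set E and endpoint maps src, tgt.
  Points of its geometric realization: vertices, and interior points (e,t), 0<t<1, of edges.\<close>
datatype ('v, 'e) gpoint = Vert 'v | Mid 'e real

datatype ('v, 'e) cell = VCell 'v | ECell 'e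

definition gpoints :: "'v set \<Rightarrow> 'e set \<Rightarrow> ('v, 'e) gpoint set" where
  "gpoints V E = Vert ` V \<union> {Mid e t | e t. e \<in> E \<and> 0 < t \<and> t < 1}"

definition cells :: "'v set \<Rightarrow> 'e set \<Rightarrow> ('v, 'e) cell set" where
  "cells V E = VCell ` V \<union> ECell ` E"

fun cell_of :: "('v, 'e) gpoint \<Rightarrow> ('v, 'e) cell" where
  "cell_of (Vert v) = VCell v"
| "cell_of (Mid e t) = ECell e"

fun cell_pt :: "('v, 'e) cell \<Rightarrow> ('v, 'e) gpoint" where
  "cell_pt (VCell v) = Vert v"
| "cell_pt (ECell e) = Mid e (1/2)"

definition char_map :: "('e \<Rightarrow> 'v) \<Rightarrow> ('e \<Rightarrow> 'v) \<Rightarrow> 'e \<Rightarrow> real \<Rightarrow> ('v, 'e) gpoint" where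
  "char_map src tgt e t = (if t = 0 then Vert (src e) else if t = 1 then Vert (tgt e) else Mid e t)"

text \<open>The CW (weak) topology: U is open iff its preimage under each characteristic map is open
  in [0,1].\<close>
definition realization :: "'v set \<Rightarrow> 'e set \<Rightarrow> ('e \<Rightarrow> 'v) \<Rightarrow> ('e \<Rightarrow> 'v) \<Rightarrow> ('v, 'e) gpoint topology" where
  "realization V E src tgt = topology (\<lambda>U. U \<subseteq> gpoints V E \<and>
      (\<forall>e\<in>E. openin (top_of_set {0..1::real}) ({0..1} \<inter> char_map src tgt e -` U)))"

definition tree_graph :: "'v set \<Rightarrow> 'e set \<Rightarrow> ('e \<Rightarrow> 'v) \<Rightarrow> ('e \<Rightarrow> 'v) \<Rightarrow> bool" where
  "tree_graph V E src tgt \<longleftrightarrow>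
     (\<forall>e\<in>E. src e \<in> V \<and> tgt e \<in> V) \<and> contractible_space (realization V E src tgt)"

definition fib :: "('g \<times> 'p) set \<Rightarrow> 'p \<Rightarrow> 'g set" where
  "fib I a = {x. (x, a) \<in> I}"

definition groupoid :: "'g monoid \<Rightarrow> 'g topology \<Rightarrow> 'v set \<Rightarrow> 'e set \<Rightarrow> ('g \<times> ('v,'e) gpoint) set \<Rightarrow> bool" where
  "groupoid Gam TGam V E I \<longleftrightarrow>
     I \<subseteq> carrier Gam \<times> gpoints V E \<and>
     (\<forall>a\<in>gpoints V E. subgroup (fib I a) Gam \<and> closedin TGam (fib I a))"

definition locally_maximal ::
  "'v set \<Rightarrow> 'e set \<Rightarrow> ('e \<Rightarrow> 'v) \<Rightarrow> ('e \<Rightarrow> 'v) \<Rightarrow> ('g \<times> ('v,'e) gpoint) set \<Rightarrow> bool" where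
  "locally_maximal V E src tgt I \<longleftrightarrow>
     (\<forall>a\<in>gpoints V E. \<forall>B. (\<exists>W. openin (realization V E src tgt) W \<and> a \<in> W \<and> W \<subseteq> B) \<longrightarrow>
        (\<exists>U \<rho>. openin (realization V E src tgt) U \<and> a \<in> U \<and> U \<subseteq> B \<and>
           continuous_map (prod_topology (top_of_set {0..1::real}) (subtopology (realization V E src tgt) U))
                          (subtopology (realization V E src tgt) U) \<rho> \<and>
           (\<forall>u\<in>U. \<rho> (0, u) = u \<and> \<rho> (1, u) = a) \<and>
           (\<forall>t\<in>{0..1}. \<forall>u\<in>U. fib I u \<subseteq> fib I (\<rho> (t, u)))))"

definition cellular_groupoid ::
  "'g monoid \<Rightarrow> 'g topology \<Rightarrow> 'v set \<Rightarrow> 'e set \<Rightarrow> ('e \<Rightarrow> 'v) \<Rightarrow> ('e \<Rightarrow> 'v) \<Rightarrow> ('g \<times> ('v,'e) gpoint) set \<Rightarrow> bool" where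
  "cellular_groupoid Gam TGam V E src tgt I \<longleftrightarrow>
     groupoid Gam TGam V E I \<and>
     (\<forall>a\<in>gpoints V E. \<forall>b\<in>gpoints V E. cell_of a = cell_of b \<longrightarrow> fib I a = fib I b) \<and>
     locally_maximal V E src tgt I"

definition Icell :: "('g \<times> ('v,'e) gpoint) set \<Rightarrow> ('v,'e) cell \<Rightarrow> 'g set" where
  "Icell I c = fib I (cell_pt c)"

definition cellular_rep ::
  "'g monoid \<Rightarrow> 'g topology \<Rightarrow> 'h monoid \<Rightarrow> 'h topology \<Rightarrow> 'v set \<Rightarrow> 'e set \<Rightarrow> ('e \<Rightarrow> 'v) \<Rightarrow> ('e \<Rightarrow> 'v)
    \<Rightarrow> ('g \<times> ('v,'e) gpoint) set \<Rightarrow> ('g \<times> ('v,'e) gpoint \<Rightarrow> 'h) \<Rightarrow> bool" where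
  "cellular_rep Gam TGam G TG V E src tgt I \<beta> \<longleftrightarrow>
     \<beta> \<in> extensional I \<and>
     continuous_map (subtopology (prod_topology TGam (realization V E src tgt)) I) TG \<beta> \<and>
     (\<forall>a\<in>gpoints V E. (\<lambda>x. \<beta> (x, a)) \<in> hom (Gam\<lparr>carrier := fib I a\<rparr>) G) \<and>
     (\<forall>a\<in>gpoints V E. \<forall>b\<in>gpoints V E. \<forall>x. cell_of a = cell_of b \<longrightarrow> x \<in> fib I a \<longrightarrow> \<beta> (x, a) = \<beta> (x, b))"

definition rep_class :: "'h monoid \<Rightarrow> ('g \<times> 'p) set \<Rightarrow> ('g \<times> 'p \<Rightarrow> 'h) \<Rightarrow> ('g \<times> 'p \<Rightarrow> 'h) set" where
  "rep_class G I \<beta> = {(\<lambda>p\<in>I. g \<otimes>\<^bsub>G\<^esub> \<beta> p \<otimes>\<^bsub>G\<^esub> inv\<^bsub>G\<^esub> g) | g. g \<in> carrier G}"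

definition Rep_cellular ::
  "'g monoid \<Rightarrow> 'g topology \<Rightarrow> 'h monoid \<Rightarrow> 'h topology \<Rightarrow> 'v set \<Rightarrow> 'e set \<Rightarrow> ('e \<Rightarrow> 'v) \<Rightarrow> ('e \<Rightarrow> 'v)
    \<Rightarrow> ('g \<times> ('v,'e) gpoint) set \<Rightarrow> ('g \<times> ('v,'e) gpoint \<Rightarrow> 'h) set set" where
  "Rep_cellular Gam TGam G TG V E src tgt I =
     rep_class G I ` {\<beta>. cellular_rep Gam TGam G TG V E src tgt I \<beta>}"

definition cont_homs :: "'g monoid \<Rightarrow> 'g topology \<Rightarrow> 'h monoid \<Rightarrow> 'h topology \<Rightarrow> 'g set \<Rightarrow> ('g \<Rightarrow> 'h) set" where
  "cont_homs Gam TGam G TG H =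
     {\<phi>. \<phi> \<in> extensional H \<and> \<phi> \<in> hom (Gam\<lparr>carrier := H\<rparr>) G \<and> continuous_map (subtopology TGam H) TG \<phi>}"

definition hom_class :: "'h monoid \<Rightarrow> 'g set \<Rightarrow> ('g \<Rightarrow> 'h) \<Rightarrow> ('g \<Rightarrow> 'h) set" where
  "hom_class G H \<phi> = {(\<lambda>x\<in>H. g \<otimes>\<^bsub>G\<^esub> \<phi> x \<otimes>\<^bsub>G\<^esub> inv\<^bsub>G\<^esub> g) | g. g \<in> carrier G}"

definition Rep_bar ::
  "'g monoid \<Rightarrow> 'g topology \<Rightarrow> 'h monoid \<Rightarrow> 'h topology \<Rightarrow> 'v set \<Rightarrow> 'e set \<Rightarrow> ('e \<Rightarrow> 'v) \<Rightarrow> ('e \<Rightarrow> 'v)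
    \<Rightarrow> ('g \<times> ('v,'e) gpoint) set \<Rightarrow> (('v,'e) cell \<Rightarrow> ('g \<Rightarrow> 'h) set) set" where
  "Rep_bar Gam TGam G TG V E src tgt I =
     {b. b \<in> extensional (cells V E) \<and>
         (\<forall>c\<in>cells V E. \<exists>\<phi>\<in>cont_homs Gam TGam G TG (Icell I c). b c = hom_class G (Icell I c) \<phi>) \<and>
         (\<forall>e\<in>E. \<forall>v\<in>{src e, tgt e}.
             b (ECell e) = (\<lambda>\<phi>. restrict \<phi> (Icell I (ECell e))) ` b (VCell v))}"

definition kappa_rep ::
  "'h monoid \<Rightarrow> 'v set \<Rightarrow> 'e set \<Rightarrow> ('g \<times> ('v,'e) gpoint) set \<Rightarrow> ('g \<times> ('v,'e) gpoint \<Rightarrow> 'h)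
    \<Rightarrow> (('v,'e) cell \<Rightarrow> ('g \<Rightarrow> 'h) set)" where
  "kappa_rep G V E I \<beta> = (\<lambda>c\<in>cells V E. hom_class G (Icell I c) (\<lambda>x. \<beta> (x, cell_pt c)))"

definition kappa ::
  "'h monoid \<Rightarrow> 'v set \<Rightarrow> 'e set \<Rightarrow> ('g \<times> ('v,'e) gpoint) set \<Rightarrow> ('g \<times> ('v,'e) gpoint \<Rightarrow> 'h) set
    \<Rightarrow> (('v,'e) cell \<Rightarrow> ('g \<Rightarrow> 'h) set)" where
  "kappa G V E I X = the_elem (kappa_rep G V E I ` X)"

end

theory Submission
  imports Defs "HOL-Complex_Analysis.Winding_Numbers"
begin



lemma istopology_realization:
  "istopology (\<lambda>U. U \<subseteq> gpoints V E \<and>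
      (\<forall>e\<in>E. openin (top_of_set {0..1::real}) ({0..1} \<inter> char_map src tgt e -` U)))"
  unfolding istopology_def
proof (intro conjI allI impI ballI)
  fix S T assume a: "S \<subseteq> gpoints V E \<and> (\<forall>e\<in>E. openin (top_of_set {0..1::real}) ({0..1} \<inter> char_map src tgt e -` S))"
     "T \<subseteq> gpoints V E \<and> (\<forall>e\<in>E. openin (top_of_set {0..1::real}) ({0..1} \<inter> char_map src tgt e -` T))"
  show "S \<inter> T \<subseteq> gpoints V E" using a by auto
  fix e assume "e \<in> E"
  have "openin (top_of_set {0..1::real}) (({0..1} \<inter> char_map src tgt e -` S) \<inter> ({0..1} \<inter> char_map src tgt e -` T))"
    using a \<open>e \<in> E\<close> by (metis openin_Int)
  then show "openin (top_of_set {0..1::real}) ({0..1} \<inter> char_map src tgt e -` (S \<inter> T))"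
    by (simp add: Int_ac vimage_Int)
next
  fix K assume a: "\<forall>S\<in>K. S \<subseteq> gpoints V E \<and> (\<forall>e\<in>E. openin (top_of_set {0..1::real}) ({0..1} \<inter> char_map src tgt e -` S))"
  show "\<Union>K \<subseteq> gpoints V E" using a by auto
  fix e assume "e \<in> E"
  then have "openin (top_of_set {0..1::real}) (\<Union>S\<in>K. {0..1} \<inter> char_map src tgt e -` S)"
    using a by (intro openin_Union) auto
  moreover have "(\<Union>S\<in>K. {0..1} \<inter> char_map src tgt e -` S) = {0..1} \<inter> char_map src tgt e -` \<Union>K"
    by auto
  ultimately show "openin (top_of_set {0..1::real}) ({0..1} \<inter> char_map src tgt e -` \<Union>K)" by simp
qed

lemma openin_realization:
  "openin (realization V E src tgt) U \<longleftrightarrow> U \<subseteq> gpoints V E \<and>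
      (\<forall>e\<in>E. openin (top_of_set {0..1::real}) ({0..1} \<inter> char_map src tgt e -` U))"
  unfolding realization_def by (subst topology_inverse'[OF istopology_realization]) (rule refl)

lemma char_map_in:
  assumes "src e \<in> V" "tgt e \<in> V" "e \<in> E" "t \<in> {0..1}"
  shows "char_map src tgt e t \<in> gpoints V E"
  using assms by (auto simp: char_map_def gpoints_def)

lemma topspace_realization:
  assumes "\<forall>e\<in>E. src e \<in> V \<and> tgt e \<in> V"
  shows "topspace (realization V E src tgt) = gpoints V E"
proof -
  have "openin (realization V E src tgt) (gpoints V E)"
    unfolding openin_realization
  proof (intro conjI ballI)
    fix e assume "e \<in> E"
    then have "{0..1} \<inter> char_map src tgt e -` gpoints V E = {0..1}"
      using assms char_map_in[of src e V tgt E] by auto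
    then show "openin (top_of_set {0..1::real}) ({0..1} \<inter> char_map src tgt e -` gpoints V E)" by simp
  qed simp
  moreover have "openin (realization V E src tgt) U \<Longrightarrow> U \<subseteq> gpoints V E" for U
    by (simp add: openin_realization)
  ultimately show ?thesis
    by (metis openin_subset openin_topspace subset_antisym)
qed

lemma continuous_char_map:
  assumes "\<forall>e\<in>E. src e \<in> V \<and> tgt e \<in> V" "e \<in> E"
  shows "continuous_map (top_of_set {0..1}) (realization V E src tgt) (char_map src tgt e)"
  unfolding continuous_map_def
proof (intro conjI allI impI)
  show "char_map src tgt e \<in> topspace (top_of_set {0..1}) \<rightarrow> topspace (realization V E src tgt)"
    using assms char_map_in[of src e V tgt E] by (auto simp: topspace_realization)
  fix U assume "openin (realization V E src tgt) U"
  then have "openin (top_of_set {0..1::real}) ({0..1} \<inter> char_map src tgt e -` U)"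
    using assms by (auto simp: openin_realization)
  moreover have "{x \<in> topspace (top_of_set {0..1::real}). char_map src tgt e x \<in> U} = {0..1} \<inter> char_map src tgt e -` U"
    by auto
  ultimately show "openin (top_of_set {0..1}) {x \<in> topspace (top_of_set {0..1::real}). char_map src tgt e x \<in> U}"
    by simp
qed

lemma continuous_from_realization:
  assumes "\<forall>e\<in>E. src e \<in> V \<and> tgt e \<in> V"
    and "\<And>e. e \<in> E \<Longrightarrow> continuous_map (top_of_set {0..1}) Y (g \<circ> char_map src tgt e)"
    and "\<And>x. x \<in> gpoints V E \<Longrightarrow> g x \<in> topspace Y"
  shows "continuous_map (realization V E src tgt) Y g"
  unfolding continuous_map_def
proof (intro conjI allI impI)
  show "g \<in> topspace (realization V E src tgt) \<rightarrow> topspace Y"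
    using assms by (auto simp: topspace_realization)
  fix U assume U: "openin Y U"
  show "openin (realization V E src tgt) {x \<in> topspace (realization V E src tgt). g x \<in> U}"
    unfolding openin_realization topspace_realization[OF assms(1)]
  proof (intro conjI ballI)
    fix e assume e: "e \<in> E"
    have "openin (top_of_set {0..1}) {x \<in> topspace (top_of_set {0..1::real}). (g \<circ> char_map src tgt e) x \<in> U}"
      using assms(2)[OF e] U by (simp add: continuous_map_def)
    moreover have "{x \<in> topspace (top_of_set {0..1::real}). (g \<circ> char_map src tgt e) x \<in> U}
       = {0..1} \<inter> char_map src tgt e -` {x \<in> gpoints V E. g x \<in> U}"
      using char_map_in[of src e V tgt E] assms(1) e by auto
    ultimately show "openin (top_of_set {0..1}) ({0..1} \<inter> char_map src tgt e -` {x \<in> gpoints V E. g x \<in> U})"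
      by simp
  qed auto
qed




definition fcirc :: "'e \<Rightarrow> ('v,'e) gpoint \<Rightarrow> complex" where
  "fcirc e0 x = (case x of Vert v \<Rightarrow> 1 | Mid e t \<Rightarrow> (if e = e0 then circlepath 0 1 t else 1))"

lemma fcirc_nz: "fcirc e0 x \<noteq> 0"
  by (auto simp: fcirc_def circlepath split: gpoint.splits)

lemma circ01: "circlepath 0 1 0 = 1" "circlepath 0 1 1 = 1"
  by (auto simp: circlepath)

lemma fcirc_cont:
  assumes ends: "\<forall>e\<in>E. src e \<in> V \<and> tgt e \<in> V"
  shows "continuous_map (realization V E src tgt) euclidean (fcirc e0)"
proof (rule continuous_from_realization[OF ends])
  fix e assume "e \<in> E"
  show "continuous_map (top_of_set {0..1}) euclidean (fcirc e0 \<circ> char_map src tgt e)"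
  proof (cases "e = e0")
    case True
    have "continuous_on {0..1} (fcirc e0 \<circ> char_map src tgt e)"
    proof (rule continuous_on_cong[THEN iffD2, OF refl _ path_circlepath[unfolded path_def, of 0 1]])
      fix t :: real assume "t \<in> {0..1}"
      then show "(fcirc e0 \<circ> char_map src tgt e) t = circlepath 0 1 t"
        using True circ01 by (auto simp: fcirc_def char_map_def)
    qed
    then show ?thesis by simp
  next
    case False
    have "continuous_on {0..1} (fcirc e0 \<circ> char_map src tgt e)"
    proof (rule continuous_on_cong[THEN iffD2, OF refl _ continuous_on_const[of _ 1]])
      fix t :: real assume "t \<in> {0..1}"
      then show "(fcirc e0 \<circ> char_map src tgt e) t = 1"
        using False by (auto simp: fcirc_def char_map_def)
    qed
    then show ?thesis by simp
  qed
qed auto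

lemma no_cycle:
  assumes ends: "\<forall>e\<in>E. src e \<in> V \<and> tgt e \<in> V"
    and contr: "contractible_space (realization V E src tgt)"
    and e0: "e0 \<in> E"
    and p: "pathin (subtopology (realization V E src tgt) (gpoints V E - range (Mid e0))) p"
    and p0: "p 0 = Vert (tgt e0)" and p1: "p 1 = Vert (src e0)"
  shows False
proof -
  let ?R = "realization V E src tgt"
  let ?f = "fcirc e0"
  define \<gamma> where "\<gamma> t = (if t \<le> 1/2 then char_map src tgt e0 (2*t) else p (2*t - 1))" for t :: real
  have cm: "continuous_map (top_of_set {0..1}) ?R (char_map src tgt e0)"
    using continuous_char_map[OF ends e0] .
  have pR: "continuous_map (top_of_set {0..1}) ?R p"
    using p unfolding pathin_def continuous_map_in_subtopology by simp
  have pR': "p t \<in> gpoints V E - range (Mid e0)" if "t \<in> {0..1}" for t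
    using p that unfolding pathin_def continuous_map_in_subtopology by auto
  have g: "continuous_map (top_of_set {0..1}) ?R \<gamma>"
    unfolding \<gamma>_def
  proof (rule continuous_map_cases_le)
    show "continuous_map (top_of_set {0..1}) euclideanreal (\<lambda>x. x)" by simp
    show "continuous_map (top_of_set {0..1}) euclideanreal (\<lambda>x. 1/2)" by simp
    have d2: "continuous_map (top_of_set {x \<in> {0..1::real}. x \<le> 1/2}) (top_of_set {0..1}) (\<lambda>x. 2*x)"
      by (auto intro!: continuous_intros)
    have "continuous_map (top_of_set {x \<in> {0..1::real}. x \<le> 1/2}) ?R (\<lambda>x. char_map src tgt e0 (2*x))"
      using continuous_map_compose[OF d2 cm] by (simp add: o_def)
    moreover have "subtopology (top_of_set {0..1}) {x \<in> topspace (top_of_set {0..1::real}). x \<le> 1/2} = top_of_set {x \<in> {0..1::real}. x \<le> 1/2}"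
      by (auto simp: subtopology_subtopology intro!: arg_cong[where f="top_of_set"])
    ultimately show "continuous_map (subtopology (top_of_set {0..1}) {x \<in> topspace (top_of_set {0..1::real}). x \<le> 1 / 2}) ?R
        (\<lambda>x. char_map src tgt e0 (2 * x))" by simp
    have d3: "continuous_map (top_of_set {x \<in> {0..1::real}. 1/2 \<le> x}) (top_of_set {0..1}) (\<lambda>x. 2*x - 1)"
      by (auto intro!: continuous_intros)
    have "continuous_map (top_of_set {x \<in> {0..1::real}. 1/2 \<le> x}) ?R (\<lambda>x. p (2*x - 1))"
      using continuous_map_compose[OF d3 pR] by (simp add: o_def)
    moreover have "subtopology (top_of_set {0..1}) {x \<in> topspace (top_of_set {0..1::real}). 1/2 \<le> x} = top_of_set {x \<in> {0..1::real}. 1/2 \<le> x}"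
      by (auto simp: subtopology_subtopology intro!: arg_cong[where f="top_of_set"])
    ultimately show "continuous_map (subtopology (top_of_set {0..1}) {x \<in> topspace (top_of_set {0..1::real}). 1/2 \<le> x}) ?R
        (\<lambda>x. p (2 * x - 1))" by simp
  qed (auto simp: char_map_def, metis p0 diff_self mult.commute)
  obtain a C where C: "continuous_map (prod_topology (top_of_set {0..1::real}) ?R) ?R C"
    and C0: "\<And>x. C (0, x) = x" and C1: "\<And>x. C (1, x) = a"
    using contr unfolding contractible_space_def homotopic_with_def by auto
  define L where "L = circlepath 0 1 +++ linepath 1 1"
  define h where "h = (\<lambda>(s,t). ?f (C (s, \<gamma> t)))"
  have "homotopic_loops (-{0}) L (linepath (?f a) (?f a))"
    unfolding homotopic_loops
  proof (intro exI conjI ballI)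
    have c1: "continuous_map (prod_topology (top_of_set {0..1}) (top_of_set {0..1})) (prod_topology (top_of_set {0..1::real}) ?R)
        (\<lambda>x. (fst x, \<gamma> (snd x)))"
      using continuous_map_pairedI[OF continuous_map_fst continuous_map_compose[OF continuous_map_snd g]] unfolding o_def .
    have "continuous_map (prod_topology (top_of_set {0..1}) (top_of_set {0..1})) euclidean
        (?f \<circ> (C \<circ> (\<lambda>x. (fst x, \<gamma> (snd x)))))"
      by (rule continuous_map_compose[OF continuous_map_compose[OF c1 C] fcirc_cont[OF ends]])
    moreover have "?f \<circ> (C \<circ> (\<lambda>x. (fst x, \<gamma> (snd x)))) = h"
      by (auto simp: h_def fun_eq_iff)
    ultimately show "continuous_on ({0..1} \<times> {0..1}) h" by simp
    show "h \<in> {0..1} \<times> {0..1} \<rightarrow> - {0}" by (auto simp: h_def fcirc_nz)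
    fix x :: real assume x: "x \<in> {0..1}"
    show "h (1, x) = linepath (?f a) (?f a) x"
      by (simp add: h_def C1 linepath_def algebra_simps)
    show "h (0, x) = L x"
    proof (cases "x \<le> 1/2")
      case True
      then show ?thesis using x circ01
        by (auto simp: h_def C0 \<gamma>_def L_def joinpaths_def fcirc_def char_map_def)
    next
      case False
      then have "p (2*x-1) \<in> gpoints V E - range (Mid e0)" using x by (intro pR') auto
      then have "?f (p (2*x-1)) = 1" by (auto simp: fcirc_def split: gpoint.splits)
      then show ?thesis using False
        by (auto simp: h_def C0 \<gamma>_def L_def joinpaths_def linepath_def)
    qed
  next
    fix t :: real
    show "pathfinish (h \<circ> Pair t) = pathstart (h \<circ> Pair t)"
      by (simp add: pathfinish_def pathstart_def h_def \<gamma>_def p1 char_map_def)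
  qed
  then have "winding_number L 0 = winding_number (linepath (?f a) (?f a)) 0"
    by (rule winding_number_homotopic_loops)
  also have "\<dots> = 0" using fcirc_nz[of e0 a] by simp
  finally have w0: "winding_number L 0 = 0" .
  have "winding_number L 0 = winding_number (circlepath 0 1) 0 + winding_number (linepath 1 1) 0"
    unfolding L_def by (rule winding_number_join) auto
  also have "\<dots> = 1" by (simp add: winding_number_circlepath_centre)
  finally show False using w0 by simp
qed




lemma open_side:
  assumes ends: "\<forall>e\<in>E. src e \<in> V \<and> tgt e \<in> V"
    and P: "\<forall>e\<in>E. P (src e) \<longleftrightarrow> P (tgt e)"
  shows "openin (realization V E src tgt)
     {x \<in> gpoints V E. case x of Vert v \<Rightarrow> P v | Mid e t \<Rightarrow> P (src e)}"
  unfolding openin_realization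
proof (intro conjI ballI)
  fix e assume e: "e \<in> E"
  let ?T = "{x \<in> gpoints V E. case x of Vert v \<Rightarrow> P v | Mid e t \<Rightarrow> P (src e)}"
  show "openin (top_of_set {0..1::real}) ({0..1} \<inter> char_map src tgt e -` ?T)"
  proof (cases "P (src e)")
    case True
    then have "{0..1} \<inter> char_map src tgt e -` ?T = {0..1}"
      using P e ends by (auto simp: char_map_def gpoints_def)
    then show ?thesis by simp
  next
    case False
    then have "{0..1} \<inter> char_map src tgt e -` ?T = {}"
      using P e by (auto simp: char_map_def)
    then show ?thesis by simp
  qed
qed auto

lemma graph_conn:
  assumes ends: "\<forall>e\<in>E. src e \<in> V \<and> tgt e \<in> V"
    and contr: "contractible_space (realization V E src tgt)"
    and A: "\<forall>e\<in>E. src e \<in> A \<longleftrightarrow> tgt e \<in> A"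
  shows "V \<subseteq> A \<or> V \<inter> A = {}"
proof -
  let ?R = "realization V E src tgt"
  let ?T = "{x \<in> gpoints V E. case x of Vert v \<Rightarrow> v \<in> A | Mid e t \<Rightarrow> src e \<in> A}"
  let ?T' = "{x \<in> gpoints V E. case x of Vert v \<Rightarrow> v \<notin> A | Mid e t \<Rightarrow> src e \<notin> A}"
  have o1: "openin ?R ?T" by (rule open_side[OF ends]) (use A in auto)
  have o2: "openin ?R ?T'" by (rule open_side[OF ends]) (use A in auto)
  have "?T = topspace ?R - ?T'"
    unfolding topspace_realization[OF ends]
  proof (intro equalityI subsetI)
    fix x assume "x \<in> ?T" then show "x \<in> gpoints V E - ?T'"
      by (cases x) auto
  next
    fix x assume "x \<in> gpoints V E - ?T'" then show "x \<in> ?T"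
      by (cases x) auto
  qed
  then have cl: "closedin ?R ?T" using o2 by (simp add: closedin_diff)
  have "connected_space ?R"
    using contr by (simp add: contractible_imp_path_connected_space path_connected_imp_connected_space)
  then have "?T = {} \<or> ?T = topspace ?R"
    using o1 cl unfolding connected_space_clopen_in by blast
  then show ?thesis
  proof
    assume "?T = {}"
    then show ?thesis by (auto simp: gpoints_def)
  next
    assume "?T = topspace ?R"
    then have "Vert v \<in> ?T" if "v \<in> V" for v using that
      by (simp add: topspace_realization[OF ends] gpoints_def)
    then show ?thesis by auto
  qed
qed

lemma bridge:
  assumes ends: "\<forall>e\<in>E. src e \<in> V \<and> tgt e \<in> V"
    and contr: "contractible_space (realization V E src tgt)"
    and e0: "e0 \<in> E" and ne: "src e0 \<noteq> tgt e0"
  shows "\<exists>A. src e0 \<in> A \<and> tgt e0 \<notin> A \<and> (\<forall>e\<in>E. e \<noteq> e0 \<longrightarrow> (src e \<in> A \<longleftrightarrow> tgt e \<in> A))"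
proof -
  let ?R = "realization V E src tgt"
  let ?R' = "subtopology ?R (gpoints V E - range (Mid e0))"
  define A where "A = {v. path_component_of ?R' (Vert (src e0)) (Vert v)}"
  have "src e0 \<in> A"
    using ends e0 by (auto simp: A_def path_component_of_refl topspace_realization gpoints_def)
  moreover have "tgt e0 \<notin> A"
  proof
    assume "tgt e0 \<in> A"
    then have "path_component_of ?R' (Vert (tgt e0)) (Vert (src e0))"
      by (simp add: A_def path_component_of_sym)
    then obtain p where "pathin ?R' p" "p 0 = Vert (tgt e0)" "p 1 = Vert (src e0)"
      unfolding path_component_of_def by blast
    then show False using no_cycle[OF ends contr e0] by blast
  qed
  moreover have "src e \<in> A \<longleftrightarrow> tgt e \<in> A" if e: "e \<in> E" "e \<noteq> e0" for e
  proof -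
    have "pathin ?R' (char_map src tgt e)"
      unfolding pathin_def continuous_map_in_subtopology
      using continuous_char_map[OF ends e(1)] char_map_in[of src e V tgt E] ends e
      by (auto simp: char_map_def split: if_splits)
    then have pc: "path_component_of ?R' (Vert (src e)) (Vert (tgt e))"
      unfolding path_component_of_def by (intro exI[of _ "char_map src tgt e"]) (simp add: char_map_def)
    show ?thesis unfolding A_def mem_Collect_eq
      using path_component_of_trans[OF _ pc] path_component_of_trans[OF _ path_component_of_sym[OF pc]] by blast
  qed
  ultimately show ?thesis by blast
qed




definition gconn :: "'e set \<Rightarrow> ('e \<Rightarrow> 'v) \<Rightarrow> ('e \<Rightarrow> 'v) \<Rightarrow> 'v set \<Rightarrow> bool" where
  "gconn E src tgt S \<longleftrightarrow> (\<forall>A. (\<forall>e\<in>E. src e \<in> S \<longrightarrow> tgt e \<in> S \<longrightarrow> (src e \<in> A \<longleftrightarrow> tgt e \<in> A))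
       \<longrightarrow> S \<subseteq> A \<or> S \<inter> A = {})"

lemma gconnD:
  "gconn E src tgt S \<Longrightarrow> (\<forall>e\<in>E. src e \<in> S \<longrightarrow> tgt e \<in> S \<longrightarrow> (src e \<in> A \<longleftrightarrow> tgt e \<in> A))
    \<Longrightarrow> S \<subseteq> A \<or> S \<inter> A = {}"
  unfolding gconn_def by blast

lemma glue:
  fixes V :: "'v set" and E :: "'e set" and K :: "'v \<Rightarrow> 'x set" and Rl :: "'e \<Rightarrow> 'x \<Rightarrow> 'x \<Rightarrow> bool"
  assumes ends: "\<forall>e\<in>E. src e \<in> V \<and> tgt e \<in> V"
    and Kne: "\<And>v. v \<in> V \<Longrightarrow> K v \<noteq> {}"
    and rfl: "\<And>e \<phi>. Rl e \<phi> \<phi>"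
    and ext1: "\<And>e \<phi>. e \<in> E \<Longrightarrow> \<phi> \<in> K (src e) \<Longrightarrow> \<exists>\<psi>\<in>K (tgt e). Rl e \<phi> \<psi>"
    and ext2: "\<And>e \<psi>. e \<in> E \<Longrightarrow> \<psi> \<in> K (tgt e) \<Longrightarrow> \<exists>\<phi>\<in>K (src e). Rl e \<phi> \<psi>"
    and conn: "\<And>A. \<forall>e\<in>E. src e \<in> A \<longleftrightarrow> tgt e \<in> A \<Longrightarrow> V \<subseteq> A \<or> V \<inter> A = {}"
    and bridge: "\<And>e0. e0 \<in> E \<Longrightarrow> src e0 \<noteq> tgt e0 \<Longrightarrow>
        \<exists>A. src e0 \<in> A \<and> tgt e0 \<notin> A \<and> (\<forall>e\<in>E. e \<noteq> e0 \<longrightarrow> (src e \<in> A \<longleftrightarrow> tgt e \<in> A))"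
  shows "\<exists>\<Phi>. (\<forall>v\<in>V. \<Phi> v \<in> K v) \<and> (\<forall>e\<in>E. Rl e (\<Phi> (src e)) (\<Phi> (tgt e)))"
proof -
  define F where "F = {P. Domain P \<subseteq> V \<and> single_valued P \<and> (\<forall>(v,\<phi>)\<in>P. \<phi> \<in> K v) \<and>
     (\<forall>e\<in>E. \<forall>\<phi> \<psi>. (src e, \<phi>) \<in> P \<longrightarrow> (tgt e, \<psi>) \<in> P \<longrightarrow> Rl e \<phi> \<psi>) \<and> gconn E src tgt (Domain P)}"
  have "\<exists>M\<in>F. \<forall>X\<in>F. M \<subseteq> X \<longrightarrow> X = M"
  proof (rule Zorn_Lemma2, intro ballI)
    fix C assume C: "C \<in> chains F"
    have CF: "C \<subseteq> F" using C by (simp add: chains_def)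
    have ch: "\<And>P Q. P \<in> C \<Longrightarrow> Q \<in> C \<Longrightarrow> P \<subseteq> Q \<or> Q \<subseteq> P" using C chainsD by blast
    have "\<Union>C \<in> F"
      unfolding F_def mem_Collect_eq
    proof (intro conjI)
      show "Domain (\<Union>C) \<subseteq> V" using CF unfolding F_def by blast
      show "single_valued (\<Union>C)"
        unfolding single_valued_def
      proof (intro allI impI)
        fix x y z assume "(x, y) \<in> \<Union>C" "(x, z) \<in> \<Union>C"
        then obtain P Q where "P \<in> C" "Q \<in> C" "(x,y) \<in> P" "(x,z) \<in> Q" by auto
        moreover have "single_valued R" if "R \<in> C" for R using that CF unfolding F_def by blast
        ultimately show "y = z" using ch[of P Q] unfolding single_valued_def by blast
      qed
      show "\<forall>(v,\<phi>)\<in>\<Union>C. \<phi> \<in> K v" using CF by (auto simp: F_def)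
      show "\<forall>e\<in>E. \<forall>\<phi> \<psi>. (src e, \<phi>) \<in> \<Union>C \<longrightarrow> (tgt e, \<psi>) \<in> \<Union>C \<longrightarrow> Rl e \<phi> \<psi>"
      proof (intro ballI allI impI)
        fix e \<phi> \<psi> assume e: "e \<in> E" and "(src e, \<phi>) \<in> \<Union>C" "(tgt e, \<psi>) \<in> \<Union>C"
        then obtain P Q where PQ: "P \<in> C" "Q \<in> C" "(src e, \<phi>) \<in> P" "(tgt e, \<psi>) \<in> Q" by auto
        have Rc: "\<And>R. R \<in> C \<Longrightarrow> (src e, \<phi>) \<in> R \<Longrightarrow> (tgt e, \<psi>) \<in> R \<Longrightarrow> Rl e \<phi> \<psi>"
          using CF e unfolding F_def by blast
        from ch[OF PQ(1,2)] show "Rl e \<phi> \<psi>"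
        proof
          assume "P \<subseteq> Q" then show ?thesis using PQ Rc[of Q] by blast
        next
          assume "Q \<subseteq> P" then show ?thesis using PQ Rc[of P] by blast
        qed
      qed
      show "gconn E src tgt (Domain (\<Union>C))"
        unfolding gconn_def
      proof (intro allI impI)
        fix A assume hA: "\<forall>e\<in>E. src e \<in> Domain (\<Union>C) \<longrightarrow> tgt e \<in> Domain (\<Union>C) \<longrightarrow> (src e \<in> A \<longleftrightarrow> tgt e \<in> A)"
        show "Domain (\<Union>C) \<subseteq> A \<or> Domain (\<Union>C) \<inter> A = {}"
        proof (rule ccontr)
          assume "\<not> ?thesis"
          then obtain x y where x: "x \<in> Domain (\<Union>C)" "x \<notin> A" and y: "y \<in> Domain (\<Union>C)" "y \<in> A" by auto
          then obtain P Q where PQ: "P \<in> C" "Q \<in> C" "x \<in> Domain P" "y \<in> Domain Q" by auto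
          have *: "False" if "R \<in> C" "x \<in> Domain R" "y \<in> Domain R" for R
          proof -
            have gc: "gconn E src tgt (Domain R)" using that CF unfolding F_def by blast
            have "Domain R \<subseteq> Domain (\<Union>C)" using that by auto
            then have "\<forall>e\<in>E. src e \<in> Domain R \<longrightarrow> tgt e \<in> Domain R \<longrightarrow> (src e \<in> A \<longleftrightarrow> tgt e \<in> A)"
              using hA by blast
            then have "Domain R \<subseteq> A \<or> Domain R \<inter> A = {}"
              by (rule gconnD[OF gc])
            then show False using that x y by auto
          qed
          from ch[OF PQ(1,2)] show False
          proof
            assume "P \<subseteq> Q" then show False using * PQ by blast
          next
            assume "Q \<subseteq> P" then show False using * PQ by blast
          qed
        qed
      qed
    qed
    then show "\<exists>U\<in>F. \<forall>X\<in>C. X \<subseteq> U" by blast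
  qed
  then obtain M where MF: "M \<in> F" and Mmax: "\<And>X. X \<in> F \<Longrightarrow> M \<subseteq> X \<Longrightarrow> X = M" by blast
  let ?D = "Domain M"
  have MD: "?D \<subseteq> V" "single_valued M" "\<And>v \<phi>. (v,\<phi>) \<in> M \<Longrightarrow> \<phi> \<in> K v"
    "\<And>e \<phi> \<psi>. e \<in> E \<Longrightarrow> (src e, \<phi>) \<in> M \<Longrightarrow> (tgt e, \<psi>) \<in> M \<Longrightarrow> Rl e \<phi> \<psi>"
    "gconn E src tgt ?D"
    using MF by (auto simp: F_def)
  have VD: "V \<subseteq> ?D"
  proof (rule ccontr)
    assume "\<not> V \<subseteq> ?D"
    then obtain v0 where v0: "v0 \<in> V" "v0 \<notin> ?D" by auto
    show False
    proof (cases "?D = {}")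
      case True
      obtain \<phi>0 where \<phi>0: "\<phi>0 \<in> K v0" using Kne[OF v0(1)] by auto
      have "{(v0, \<phi>0)} \<in> F"
        unfolding F_def using v0 \<phi>0 rfl by (auto simp: single_valued_def gconn_def)
      moreover have "M \<subseteq> {(v0, \<phi>0)}" using True by auto
      ultimately have "{(v0, \<phi>0)} = M" by (rule Mmax)
      then show False using True by auto
    next
      case False
      have "\<not> (V \<subseteq> ?D \<or> V \<inter> ?D = {})" using v0 False MD(1) by auto
      then obtain e where e: "e \<in> E" "\<not> (src e \<in> ?D \<longleftrightarrow> tgt e \<in> ?D)"
        using conn[of ?D] by blast
      have uniq: "e' = e1"
        if H: "e1 \<in> E" "e' \<in> E" "w \<notin> ?D"
           "(src e1 = w \<and> tgt e1 \<in> ?D) \<or> (tgt e1 = w \<and> src e1 \<in> ?D)"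
           "(src e' = w \<and> tgt e' \<in> ?D) \<or> (tgt e' = w \<and> src e' \<in> ?D)" for e1 e' w
      proof (rule ccontr)
        assume ne: "e' \<noteq> e1"
        have "src e1 \<noteq> tgt e1" using H by auto
        then obtain A where A: "src e1 \<in> A" "tgt e1 \<notin> A" "\<forall>e\<in>E. e \<noteq> e1 \<longrightarrow> (src e \<in> A \<longleftrightarrow> tgt e \<in> A)"
          using bridge[OF H(1)] by blast
        have "\<forall>e\<in>E. src e \<in> ?D \<longrightarrow> tgt e \<in> ?D \<longrightarrow> (src e \<in> A \<longleftrightarrow> tgt e \<in> A)"
          using A(3) H(3,4) by auto
        then have side: "?D \<subseteq> A \<or> ?D \<inter> A = {}" by (rule gconnD[OF MD(5)])
        have "src e' \<in> A \<longleftrightarrow> tgt e' \<in> A" using A(3) H(2) ne by blast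
        then show False using H(4,5) side A(1,2) by auto
      qed
      have ex: "\<exists>w \<psi>. w \<in> V \<and> w \<notin> ?D \<and> \<psi> \<in> K w \<and>
          ((src e = w \<and> tgt e \<in> ?D) \<or> (tgt e = w \<and> src e \<in> ?D)) \<and>
          (\<forall>\<phi>. (src e, \<phi>) \<in> M \<longrightarrow> Rl e \<phi> \<psi>) \<and> (\<forall>\<phi>. (tgt e, \<phi>) \<in> M \<longrightarrow> Rl e \<psi> \<phi>)"
      proof (cases "src e \<in> ?D")
        case True
        then have t: "tgt e \<notin> ?D" using e by auto
        obtain \<phi> where \<phi>: "(src e, \<phi>) \<in> M" using True by auto
        obtain \<psi> where \<psi>: "\<psi> \<in> K (tgt e)" "Rl e \<phi> \<psi>" using ext1[OF e(1) MD(3)[OF \<phi>]] by blast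
        have "\<forall>\<phi>'. (src e, \<phi>') \<in> M \<longrightarrow> Rl e \<phi>' \<psi>"
          using \<phi> \<psi>(2) MD(2) unfolding single_valued_def by blast
        then show ?thesis using t True \<psi> ends e(1) by (intro exI[of _ "tgt e"] exI[of _ \<psi>]) auto
      next
        case False
        then have t: "tgt e \<in> ?D" using e by auto
        obtain \<phi> where \<phi>: "(tgt e, \<phi>) \<in> M" using t by auto
        obtain \<psi> where \<psi>: "\<psi> \<in> K (src e)" "Rl e \<psi> \<phi>" using ext2[OF e(1) MD(3)[OF \<phi>]] by blast
        have "\<forall>\<phi>'. (tgt e, \<phi>') \<in> M \<longrightarrow> Rl e \<psi> \<phi>'"
          using \<phi> \<psi>(2) MD(2) unfolding single_valued_def by blast
        then show ?thesis using t False \<psi> ends e(1) by (intro exI[of _ "src e"] exI[of _ \<psi>]) auto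
      qed
      then obtain w \<psi> where w: "w \<in> V" "w \<notin> ?D" "\<psi> \<in> K w"
        "(src e = w \<and> tgt e \<in> ?D) \<or> (tgt e = w \<and> src e \<in> ?D)"
        "\<And>\<phi>. (src e, \<phi>) \<in> M \<Longrightarrow> Rl e \<phi> \<psi>" "\<And>\<phi>. (tgt e, \<phi>) \<in> M \<Longrightarrow> Rl e \<psi> \<phi>"
        by blast
      let ?M' = "insert (w, \<psi>) M"
      have dom': "Domain ?M' = insert w ?D" by auto
      have "?M' \<in> F"
        unfolding F_def mem_Collect_eq
      proof (intro conjI)
        show "Domain ?M' \<subseteq> V" using w MD(1) by auto
        show "single_valued ?M'" using MD(2) w(2) by (auto simp: single_valued_def)
        show "\<forall>(v,\<phi>)\<in>?M'. \<phi> \<in> K v" using MD(3) w(3) by auto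
        show "\<forall>e'\<in>E. \<forall>\<phi> \<psi>'. (src e', \<phi>) \<in> ?M' \<longrightarrow> (tgt e', \<psi>') \<in> ?M' \<longrightarrow> Rl e' \<phi> \<psi>'"
        proof (intro ballI allI impI)
          fix e' \<phi> \<psi>' assume e': "e' \<in> E" and s: "(src e', \<phi>) \<in> ?M'" and t: "(tgt e', \<psi>') \<in> ?M'"
          consider "(src e', \<phi>) \<in> M" "(tgt e', \<psi>') \<in> M"
            | "src e' = w" "\<phi> = \<psi>" "tgt e' = w" "\<psi>' = \<psi>"
            | "src e' = w" "\<phi> = \<psi>" "(tgt e', \<psi>') \<in> M"
            | "(src e', \<phi>) \<in> M" "tgt e' = w" "\<psi>' = \<psi>"
            using s t by auto
          then show "Rl e' \<phi> \<psi>'"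
          proof cases
            case 1 then show ?thesis using MD(4) e' by blast
          next
            case 2 then show ?thesis using rfl by simp
          next
            case 3
            then have "e' = e" using uniq[OF e(1) e' w(2) w(4)] by auto
            then show ?thesis using 3 w(4,6) by auto
          next
            case 4
            then have "e' = e" using uniq[OF e(1) e' w(2) w(4)] by auto
            then show ?thesis using 4 w(4,5) by auto
          qed
        qed
        show "gconn E src tgt (Domain ?M')"
          unfolding dom' gconn_def
        proof (intro allI impI)
          fix A assume hA: "\<forall>e\<in>E. src e \<in> insert w ?D \<longrightarrow> tgt e \<in> insert w ?D \<longrightarrow> (src e \<in> A \<longleftrightarrow> tgt e \<in> A)"
          then have "\<forall>e\<in>E. src e \<in> ?D \<longrightarrow> tgt e \<in> ?D \<longrightarrow> (src e \<in> A \<longleftrightarrow> tgt e \<in> A)" by blast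
          then have side: "?D \<subseteq> A \<or> ?D \<inter> A = {}" by (rule gconnD[OF MD(5)])
          have "src e \<in> A \<longleftrightarrow> tgt e \<in> A" using hA e(1) w(4) by auto
          then show "insert w ?D \<subseteq> A \<or> insert w ?D \<inter> A = {}" using side w(4) by auto
        qed
      qed
      moreover have "M \<subseteq> ?M'" by auto
      ultimately have "?M' = M" using Mmax by blast
      then show False using w(2) by auto
    qed
  qed
  define \<Phi> where "\<Phi> v = (THE \<phi>. (v, \<phi>) \<in> M)" for v
  have \<Phi>: "(v, \<Phi> v) \<in> M" if v: "v \<in> V" for v
  proof -
    obtain \<phi> where "(v, \<phi>) \<in> M" using VD v by auto
    moreover then have "\<Phi> v = \<phi>" unfolding \<Phi>_def using MD(2)
      by (intro the_equality) (auto simp: single_valued_def)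
    ultimately show ?thesis by simp
  qed
  show ?thesis
    using \<Phi> MD(3,4) ends by (intro exI[of _ \<Phi>]) blast
qed




lemma conj_cont:
  assumes TG: "topological_group G TG" and g: "g \<in> carrier G"
  shows "continuous_map TG TG (\<lambda>y. g \<otimes>\<^bsub>G\<^esub> y \<otimes>\<^bsub>G\<^esub> inv\<^bsub>G\<^esub> g)"
proof -
  have grp: "group G" and ts: "topspace TG = carrier G"
    and M: "continuous_map (prod_topology TG TG) TG (\<lambda>p. fst p \<otimes>\<^bsub>G\<^esub> snd p)"
    using TG by (auto simp: topological_group_def)
  have ig: "inv\<^bsub>G\<^esub> g \<in> carrier G" using grp g by (simp add: group.inv_closed)
  have p1: "continuous_map TG (prod_topology TG TG) (\<lambda>y. (g, y))"
    using g ts by (intro continuous_map_pairedI) auto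
  have s1: "continuous_map TG TG (\<lambda>y. g \<otimes>\<^bsub>G\<^esub> y)"
    using continuous_map_compose[OF p1 M] by (simp add: o_def)
  have p2: "continuous_map TG (prod_topology TG TG) (\<lambda>y. (g \<otimes>\<^bsub>G\<^esub> y, inv\<^bsub>G\<^esub> g))"
    using s1 ig ts by (intro continuous_map_pairedI) auto
  show ?thesis
    using continuous_map_compose[OF p2 M] by (simp add: o_def)
qed

lemma hom_cong_sub:
  assumes "subgroup H Gam" "f \<in> hom (Gam\<lparr>carrier := H\<rparr>) G" "\<And>x. x \<in> H \<Longrightarrow> g x = f x"
  shows "g \<in> hom (Gam\<lparr>carrier := H\<rparr>) G"
  using assms unfolding hom_def by (auto simp: subgroup.m_closed)

lemma hom_class_cong:
  assumes "\<And>x. x \<in> H \<Longrightarrow> \<phi> x = \<psi> x"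
  shows "hom_class G H \<phi> = hom_class G H \<psi>"
  unfolding hom_class_def using assms by (metis (no_types, lifting) restrict_ext)

lemma hom_class_trans:
  assumes grp: "group G" and \<phi>: "\<And>x. x \<in> H \<Longrightarrow> \<phi> x \<in> carrier G" and \<psi>: "\<psi> \<in> hom_class G H \<phi>"
  shows "hom_class G H \<psi> = hom_class G H \<phi>"
proof -
  interpret group G by (rule grp)
  obtain g where g: "g \<in> carrier G" and \<psi>g: "\<psi> = (\<lambda>x\<in>H. g \<otimes>\<^bsub>G\<^esub> \<phi> x \<otimes>\<^bsub>G\<^esub> inv\<^bsub>G\<^esub> g)"
    using \<psi> by (auto simp: hom_class_def)
  have key: "(\<lambda>x\<in>H. h \<otimes>\<^bsub>G\<^esub> \<psi> x \<otimes>\<^bsub>G\<^esub> inv\<^bsub>G\<^esub> h) = (\<lambda>x\<in>H. (h \<otimes>\<^bsub>G\<^esub> g) \<otimes>\<^bsub>G\<^esub> \<phi> x \<otimes>\<^bsub>G\<^esub> inv\<^bsub>G\<^esub> (h \<otimes>\<^bsub>G\<^esub> g))"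
    if h: "h \<in> carrier G" for h
    using h g \<phi> by (intro restrict_ext) (simp add: \<psi>g m_assoc inv_mult_group)
  show ?thesis
  proof
    show "hom_class G H \<psi> \<subseteq> hom_class G H \<phi>"
      unfolding hom_class_def using key g by auto
    show "hom_class G H \<phi> \<subseteq> hom_class G H \<psi>"
    proof
      fix f assume "f \<in> hom_class G H \<phi>"
      then obtain k where k: "k \<in> carrier G" "f = (\<lambda>x\<in>H. k \<otimes>\<^bsub>G\<^esub> \<phi> x \<otimes>\<^bsub>G\<^esub> inv\<^bsub>G\<^esub> k)"
        by (auto simp: hom_class_def)
      have "f = (\<lambda>x\<in>H. (k \<otimes>\<^bsub>G\<^esub> inv\<^bsub>G\<^esub> g) \<otimes>\<^bsub>G\<^esub> \<psi> x \<otimes>\<^bsub>G\<^esub> inv\<^bsub>G\<^esub> (k \<otimes>\<^bsub>G\<^esub> inv\<^bsub>G\<^esub> g))"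
        using key[of "k \<otimes>\<^bsub>G\<^esub> inv\<^bsub>G\<^esub> g"] k g by (simp add: m_assoc)
      then show "f \<in> hom_class G H \<psi>"
        unfolding hom_class_def using k g by blast
    qed
  qed
qed

lemma hom_class_self:
  assumes grp: "group G" and \<phi>: "\<And>x. x \<in> H \<Longrightarrow> \<phi> x \<in> carrier G" and ext: "\<phi> \<in> extensional H"
  shows "\<phi> \<in> hom_class G H \<phi>"
proof -
  interpret group G by (rule grp)
  have "\<phi> = (\<lambda>x\<in>H. \<one>\<^bsub>G\<^esub> \<otimes>\<^bsub>G\<^esub> \<phi> x \<otimes>\<^bsub>G\<^esub> inv\<^bsub>G\<^esub> \<one>\<^bsub>G\<^esub>)"
    using \<phi> ext by (auto simp: fun_eq_iff extensional_def)
  then show ?thesis unfolding hom_class_def by blast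
qed

lemma hom_class_cont_homs:
  assumes TG: "topological_group G TG" and H: "subgroup H Gam"
    and \<phi>: "\<phi> \<in> cont_homs Gam TGam G TG H" and \<psi>: "\<psi> \<in> hom_class G H \<phi>"
  shows "\<psi> \<in> cont_homs Gam TGam G TG H"
proof -
  have grp: "group G" using TG by (simp add: topological_group_def)
  interpret group G by (rule grp)
  obtain g where g: "g \<in> carrier G" and \<psi>g: "\<psi> = (\<lambda>x\<in>H. g \<otimes>\<^bsub>G\<^esub> \<phi> x \<otimes>\<^bsub>G\<^esub> inv\<^bsub>G\<^esub> g)"
    using \<psi> by (auto simp: hom_class_def)
  have \<phi>h: "\<phi> \<in> hom (Gam\<lparr>carrier := H\<rparr>) G" and \<phi>c: "continuous_map (subtopology TGam H) TG \<phi>"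
    using \<phi> by (auto simp: cont_homs_def)
  have \<phi>in: "\<phi> x \<in> carrier G" if "x \<in> H" for x
    using \<phi>h that unfolding hom_def by auto
  have hom: "\<psi> \<in> hom (Gam\<lparr>carrier := H\<rparr>) G"
    unfolding hom_def
  proof (intro CollectI conjI ballI)
    show "\<psi> \<in> carrier (Gam\<lparr>carrier := H\<rparr>) \<rightarrow> carrier G"
      using \<phi>in g by (auto simp: \<psi>g)
    fix x y assume xy: "x \<in> carrier (Gam\<lparr>carrier := H\<rparr>)" "y \<in> carrier (Gam\<lparr>carrier := H\<rparr>)"
    then have xy': "x \<in> H" "y \<in> H" "x \<otimes>\<^bsub>Gam\<^esub> y \<in> H" using H by (auto simp: subgroup.m_closed)
    have "\<phi> (x \<otimes>\<^bsub>Gam\<^esub> y) = \<phi> x \<otimes>\<^bsub>G\<^esub> \<phi> y"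
      using \<phi>h xy unfolding hom_def by auto
    then show "\<psi> (x \<otimes>\<^bsub>Gam\<lparr>carrier := H\<rparr>\<^esub> y) = \<psi> x \<otimes>\<^bsub>G\<^esub> \<psi> y"
    proof -
      have lc: "inv\<^bsub>G\<^esub> g \<otimes>\<^bsub>G\<^esub> (g \<otimes>\<^bsub>G\<^esub> z) = z" if "z \<in> carrier G" for z
        using g that by (simp add: m_assoc[symmetric])
      show ?thesis
        using xy' g \<phi>in \<open>\<phi> (x \<otimes>\<^bsub>Gam\<^esub> y) = \<phi> x \<otimes>\<^bsub>G\<^esub> \<phi> y\<close> by (simp add: \<psi>g m_assoc lc)
    qed
  qed
  have "continuous_map (subtopology TGam H) TG ((\<lambda>y. g \<otimes>\<^bsub>G\<^esub> y \<otimes>\<^bsub>G\<^esub> inv\<^bsub>G\<^esub> g) \<circ> \<phi>)"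
    by (rule continuous_map_compose[OF \<phi>c conj_cont[OF TG g]])
  then have cont: "continuous_map (subtopology TGam H) TG \<psi>"
    by (rule continuous_map_eq) (auto simp: \<psi>g)
  show ?thesis using hom cont by (simp add: cont_homs_def \<psi>g)
qed




lemma mid_in: "e \<in> E \<Longrightarrow> 0 < t \<Longrightarrow> t < 1 \<Longrightarrow> Mid e t \<in> gpoints V E"
  by (auto simp: gpoints_def)

lemma lm_sub:
  assumes ends: "\<forall>e\<in>E. src e \<in> V \<and> tgt e \<in> V"
    and LM: "locally_maximal V E src tgt I"
    and cel: "\<forall>a\<in>gpoints V E. \<forall>b\<in>gpoints V E. cell_of a = cell_of b \<longrightarrow> fib I a = fib I b"
    and e: "e \<in> E" and v: "src e = v \<or> tgt e = v"
  shows "Icell I (ECell e) \<subseteq> Icell I (VCell v)"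
proof -
  let ?R = "realization V E src tgt"
  have vV: "Vert v \<in> gpoints V E" using ends e v by (auto simp: gpoints_def)
  have "openin ?R (gpoints V E)" using topspace_realization[OF ends] by (metis openin_topspace)
  then have hW: "\<exists>W. openin ?R W \<and> Vert v \<in> W \<and> W \<subseteq> gpoints V E" using vV by blast
  obtain U \<rho> where U: "openin ?R U" "Vert v \<in> U"
    and \<rho>1: "\<forall>u\<in>U. \<rho> (0, u) = u \<and> \<rho> (1, u) = Vert v"
    and \<rho>f: "\<forall>t\<in>{0..1::real}. \<forall>u\<in>U. fib I u \<subseteq> fib I (\<rho> (t, u))"
    using LM[unfolded locally_maximal_def, rule_format, OF vV hW] by blast
  have P: "openin (top_of_set {0..1::real}) ({0..1} \<inter> char_map src tgt e -` U)"
    using U(1) e by (simp add: openin_realization)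
  have "\<exists>t. 0 < t \<and> t < 1 \<and> Mid e t \<in> U"
  proof (cases "src e = v")
    case True
    then have "0 \<in> {0..1} \<inter> char_map src tgt e -` U" using U(2) by (simp add: char_map_def)
    then obtain \<epsilon> where \<epsilon>: "\<epsilon> > 0" "\<forall>x'\<in>{0..1}. dist x' 0 < \<epsilon> \<longrightarrow> x' \<in> {0..1} \<inter> char_map src tgt e -` U"
      using P unfolding openin_euclidean_subtopology_iff by blast
    define t where "t = min (\<epsilon>/2) (1/2::real)"
    have t: "0 < t" "t < 1" "dist t 0 < \<epsilon>" using \<epsilon>(1) by (auto simp: t_def dist_real_def)
    then have "char_map src tgt e t \<in> U" using \<epsilon>(2) by auto
    then show ?thesis using t by (intro exI[of _ t]) (auto simp: char_map_def)
  next
    case False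
    then have tv: "tgt e = v" using v by auto
    then have "1 \<in> {0..1} \<inter> char_map src tgt e -` U" using U(2) by (simp add: char_map_def)
    then obtain \<epsilon> where \<epsilon>: "\<epsilon> > 0" "\<forall>x'\<in>{0..1}. dist x' 1 < \<epsilon> \<longrightarrow> x' \<in> {0..1} \<inter> char_map src tgt e -` U"
      using P unfolding openin_euclidean_subtopology_iff by blast
    define t where "t = max (1 - \<epsilon>/2) (1/2::real)"
    have t: "0 < t" "t < 1" "dist t 1 < \<epsilon>" using \<epsilon>(1) by (auto simp: t_def dist_real_def)
    then have "char_map src tgt e t \<in> U" using \<epsilon>(2) by auto
    then show ?thesis using t by (intro exI[of _ t]) (auto simp: char_map_def)
  qed
  then obtain t where t: "0 < t" "t < 1" "Mid e t \<in> U" by blast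
  have "fib I (Mid e t) \<subseteq> fib I (\<rho> (1, Mid e t))" using \<rho>f[rule_format, of 1 "Mid e t"] t(3) by simp
  moreover have "\<rho> (1, Mid e t) = Vert v" using \<rho>1 t(3) by simp
  ultimately have "fib I (Mid e t) \<subseteq> fib I (Vert v)" by simp
  moreover have "fib I (Mid e t) = fib I (Mid e (1/2))"
  proof -
    have "Mid e t \<in> gpoints V E" "Mid e (1/2) \<in> gpoints V E" using e t by (auto intro: mid_in)
    then show ?thesis using cel[rule_format, of "Mid e t" "Mid e (1/2)"] by simp
  qed
  ultimately show ?thesis by (simp add: Icell_def)
qed

fun Wc :: "'e set \<Rightarrow> ('e \<Rightarrow> 'v) \<Rightarrow> ('e \<Rightarrow> 'v) \<Rightarrow> ('v,'e) cell \<Rightarrow> ('v,'e) gpoint set" where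
  "Wc E src tgt (VCell v) = insert (Vert v) {Mid e t |e t. e \<in> E \<and> 0 < t \<and> t < 1 \<and> (src e = v \<or> tgt e = v)}"
| "Wc E src tgt (ECell e) = {Mid e t | t. 0 < t \<and> t < 1}"

lemma Wc_open:
  assumes ends: "\<forall>e\<in>E. src e \<in> V \<and> tgt e \<in> V" and c: "c \<in> cells V E"
  shows "openin (realization V E src tgt) (Wc E src tgt c)"
  unfolding openin_realization
proof (intro conjI ballI)
  show "Wc E src tgt c \<subseteq> gpoints V E" using c by (auto simp: cells_def gpoints_def)
  fix e' assume e': "e' \<in> E"
  show "openin (top_of_set {0..1::real}) ({0..1} \<inter> char_map src tgt e' -` Wc E src tgt c)"
  proof (cases c)
    case (VCell v)
    define Ov where "Ov = (if src e' = v then {..<1::real} else {}) \<union> (if tgt e' = v then {0<..} else {})"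
    have "open Ov" unfolding Ov_def by (intro open_Un) auto
    moreover have "{0..1} \<inter> char_map src tgt e' -` Wc E src tgt c = {0..1} \<inter> Ov"
    proof (intro equalityI subsetI)
      fix t assume "t \<in> {0..1} \<inter> char_map src tgt e' -` Wc E src tgt c"
      then have t: "t \<in> {0..1}" "char_map src tgt e' t \<in> Wc E src tgt (VCell v)" by (auto simp: VCell)
      show "t \<in> {0..1} \<inter> Ov"
      proof (cases "t = 0 \<or> t = 1")
        case True then show ?thesis using t by (auto simp: Ov_def char_map_def)
      next
        case False then show ?thesis using t by (auto simp: Ov_def char_map_def)
      qed
    next
      fix t assume t: "t \<in> {0..1} \<inter> Ov"
      show "t \<in> {0..1} \<inter> char_map src tgt e' -` Wc E src tgt c"
      proof (cases "t = 0 \<or> t = 1")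
        case True then show ?thesis using t e' by (auto simp: Ov_def char_map_def VCell split: if_splits)
      next
        case False then show ?thesis using t e' by (auto simp: Ov_def char_map_def VCell split: if_splits)
      qed
    qed
    ultimately show ?thesis by (simp add: openin_open_Int)
  next
    case (ECell e)
    define Ov where "Ov = (if e' = e then {0<..<1::real} else {})"
    have "open Ov" by (simp add: Ov_def)
    moreover have "{0..1} \<inter> char_map src tgt e' -` Wc E src tgt c = {0..1} \<inter> Ov"
      by (auto simp: ECell Ov_def char_map_def)
    ultimately show ?thesis by (simp add: openin_open_Int)
  qed
qed




theorem lemma5p14:
  fixes Gam :: "'g monoid" and TGam :: "'g topology"
    and G :: "'h monoid" and TG :: "'h topology"
    and V :: "'v set" and E :: "'e set" and src tgt :: "'e \<Rightarrow> 'v"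
    and I :: "('g \<times> ('v,'e) gpoint) set"
  assumes "topological_group Gam TGam"
    and "topological_group G TG"
    and "tree_graph V E src tgt"
    and "cellular_groupoid Gam TGam V E src tgt I"
  shows "Rep_bar Gam TGam G TG V E src tgt I
           \<subseteq> kappa G V E I ` Rep_cellular Gam TGam G TG V E src tgt I"
proof
  fix b assume b: "b \<in> Rep_bar Gam TGam G TG V E src tgt I"
  let ?R = "realization V E src tgt"
  have TG: "topological_group G TG" by fact
  have grp: "group G" using TG by (simp add: topological_group_def)
  have ends: "\<forall>e\<in>E. src e \<in> V \<and> tgt e \<in> V" and contr: "contractible_space ?R"
    using assms(3) by (auto simp: tree_graph_def)
  have gd: "groupoid Gam TGam V E I"
    and cel: "\<forall>a\<in>gpoints V E. \<forall>b\<in>gpoints V E. cell_of a = cell_of b \<longrightarrow> fib I a = fib I b"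
    and LM: "locally_maximal V E src tgt I"
    using assms(4) unfolding cellular_groupoid_def by blast+
  have sub: "subgroup (fib I a) Gam" if "a \<in> gpoints V E" for a
    using gd that unfolding groupoid_def by blast
  have bext: "b \<in> extensional (cells V E)"
    and bhc: "\<And>c. c \<in> cells V E \<Longrightarrow> \<exists>\<phi>\<in>cont_homs Gam TGam G TG (Icell I c). b c = hom_class G (Icell I c) \<phi>"
    using b unfolding Rep_bar_def by auto
  have bc0: "\<forall>e\<in>E. \<forall>v\<in>{src e, tgt e}. b (ECell e) = (\<lambda>\<phi>. restrict \<phi> (Icell I (ECell e))) ` b (VCell v)"
    using b unfolding Rep_bar_def by blast
  have bcomp: "b (ECell e) = (\<lambda>\<phi>. restrict \<phi> (Icell I (ECell e))) ` b (VCell v)"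
    if "e \<in> E" "v \<in> {src e, tgt e}" for e v
    using bc0 that by blast
  have cpt: "cell_pt c \<in> gpoints V E" "cell_of (cell_pt c) = c" if "c \<in> cells V E" for c
  proof -
    show "cell_of (cell_pt c) = c" by (cases c) auto
    show "cell_pt c \<in> gpoints V E"
    proof (cases c)
      case (VCell v) then show ?thesis using that by (auto simp: cells_def gpoints_def)
    next
      case (ECell e) then show ?thesis using that by (auto simp: cells_def intro!: mid_in)
    qed
  qed
  have fibcell: "fib I a = Icell I (cell_of a)" "cell_of a \<in> cells V E" if a: "a \<in> gpoints V E" for a
  proof -
    show cc: "cell_of a \<in> cells V E" using a by (auto simp: gpoints_def cells_def)
    show "fib I a = Icell I (cell_of a)"
      unfolding Icell_def using cel[rule_format, OF a cpt(1)[OF cc]] cpt(2)[OF cc] by simp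
  qed
  have subc: "subgroup (Icell I c) Gam" if "c \<in> cells V E" for c
    using sub[OF cpt(1)[OF that]] by (simp add: Icell_def)
  have contin: "\<phi> x \<in> carrier G" if "\<phi> \<in> cont_homs Gam TGam G TG H" "x \<in> H" for \<phi> H x
    using that by (auto simp: cont_homs_def hom_def)
  have bcont: "\<psi> \<in> cont_homs Gam TGam G TG (Icell I c)" if H: "c \<in> cells V E" "\<psi> \<in> b c" for c \<psi>
  proof -
    obtain \<phi> where "\<phi> \<in> cont_homs Gam TGam G TG (Icell I c)" "b c = hom_class G (Icell I c) \<phi>"
      using bhc[OF H(1)] by blast
    then show ?thesis using hom_class_cont_homs[OF TG subc[OF H(1)]] H(2) by blast
  qed
  have bcls: "hom_class G (Icell I c) \<psi> = b c" if H: "c \<in> cells V E" "\<psi> \<in> b c" for c \<psi>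
  proof -
    obtain \<phi> where \<phi>: "\<phi> \<in> cont_homs Gam TGam G TG (Icell I c)" "b c = hom_class G (Icell I c) \<phi>"
      using bhc[OF H(1)] by blast
    show ?thesis using hom_class_trans[OF grp, of "Icell I c" \<phi> \<psi>] contin[OF \<phi>(1)] \<phi>(2) H(2) by simp
  qed
  have bne: "b c \<noteq> {}" if H: "c \<in> cells V E" for c
  proof -
    obtain \<phi> where \<phi>: "\<phi> \<in> cont_homs Gam TGam G TG (Icell I c)" "b c = hom_class G (Icell I c) \<phi>"
      using bhc[OF H] by blast
    have "\<phi> \<in> extensional (Icell I c)" using \<phi>(1) by (simp add: cont_homs_def)
    then have "\<phi> \<in> b c" using hom_class_self[OF grp, of "Icell I c" \<phi>] contin[OF \<phi>(1)] \<phi>(2) by simp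
    then show ?thesis by blast
  qed
  have vcell: "VCell v \<in> cells V E" if "v \<in> V" for v using that by (simp add: cells_def)
  have ecell: "ECell e \<in> cells V E" if "e \<in> E" for e using that by (simp add: cells_def)
  obtain \<Phi> where \<Phi>: "\<forall>v\<in>V. \<Phi> v \<in> b (VCell v)"
    and \<Phi>e: "\<forall>e\<in>E. restrict (\<Phi> (src e)) (Icell I (ECell e)) = restrict (\<Phi> (tgt e)) (Icell I (ECell e))"
  proof -
    have "\<exists>\<Phi>. (\<forall>v\<in>V. \<Phi> v \<in> b (VCell v)) \<and>
        (\<forall>e\<in>E. (\<lambda>e \<phi> \<psi>. restrict \<phi> (Icell I (ECell e)) = restrict \<psi> (Icell I (ECell e))) e (\<Phi> (src e)) (\<Phi> (tgt e)))"
    proof (rule glue[OF ends])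
      show "\<And>v. v \<in> V \<Longrightarrow> b (VCell v) \<noteq> {}" using bne vcell by blast
      show "\<And>e \<phi>. restrict \<phi> (Icell I (ECell e)) = restrict \<phi> (Icell I (ECell e))" by simp
      show "\<exists>\<psi>\<in>b (VCell (tgt e)). restrict \<phi> (Icell I (ECell e)) = restrict \<psi> (Icell I (ECell e))"
        if "e \<in> E" "\<phi> \<in> b (VCell (src e))" for e \<phi>
      proof -
        have "restrict \<phi> (Icell I (ECell e)) \<in> b (ECell e)" using bcomp[OF that(1), of "src e"] that(2) by blast
        then show ?thesis using bcomp[OF that(1), of "tgt e"] by auto
      qed
      show "\<exists>\<phi>\<in>b (VCell (src e)). restrict \<phi> (Icell I (ECell e)) = restrict \<psi> (Icell I (ECell e))"
        if "e \<in> E" "\<psi> \<in> b (VCell (tgt e))" for e \<psi>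
      proof -
        have "restrict \<psi> (Icell I (ECell e)) \<in> b (ECell e)" using bcomp[OF that(1), of "tgt e"] that(2) by blast
        then show ?thesis using bcomp[OF that(1), of "src e"] by auto
      qed
      show "\<And>A. \<forall>e\<in>E. (src e \<in> A) = (tgt e \<in> A) \<Longrightarrow> V \<subseteq> A \<or> V \<inter> A = {}"
        using graph_conn[OF ends contr] by blast
      show "\<And>e0. e0 \<in> E \<Longrightarrow> src e0 \<noteq> tgt e0 \<Longrightarrow>
          \<exists>A. src e0 \<in> A \<and> tgt e0 \<notin> A \<and> (\<forall>e\<in>E. e \<noteq> e0 \<longrightarrow> (src e \<in> A) = (tgt e \<in> A))"
        using bridge[OF ends contr] by blast
    qed
    then show ?thesis using that by auto
  qed
  define \<psi>c where "\<psi>c c = (case c of VCell v \<Rightarrow> \<Phi> v | ECell e \<Rightarrow> restrict (\<Phi> (src e)) (Icell I (ECell e)))" for c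
  have \<psi>in: "\<psi>c c \<in> b c" if c: "c \<in> cells V E" for c
  proof (cases c)
    case (VCell v) then show ?thesis using \<Phi> c by (auto simp: \<psi>c_def cells_def)
  next
    case (ECell e)
    then have e: "e \<in> E" using c by (auto simp: cells_def)
    then show ?thesis using bcomp[OF e, of "src e"] \<Phi> ends ECell by (auto simp: \<psi>c_def)
  qed
  have \<psi>cont: "\<psi>c c \<in> cont_homs Gam TGam G TG (Icell I c)" if "c \<in> cells V E" for c
    using bcont[OF that \<psi>in[OF that]] .
  have \<psi>edge: "\<psi>c (ECell e) x = \<Phi> v x" if "e \<in> E" "src e = v \<or> tgt e = v" "x \<in> Icell I (ECell e)" for e v x
  proof -
    have "restrict (\<Phi> (src e)) (Icell I (ECell e)) x = restrict (\<Phi> (tgt e)) (Icell I (ECell e)) x"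
      using \<Phi>e that(1) by simp
    then show ?thesis using that by (auto simp: \<psi>c_def)
  qed
  have Wsub: "fib I a \<subseteq> Icell I c" if c: "c \<in> cells V E" and a: "a \<in> Wc E src tgt c" for c a
  proof (cases c)
    case (VCell v)
    show ?thesis
    proof (cases "a = Vert v")
      case True then show ?thesis by (simp add: VCell Icell_def)
    next
      case False
      then obtain e t where et: "a = Mid e t" "e \<in> E" "0 < t" "t < 1" "src e = v \<or> tgt e = v"
        using a VCell by auto
      then have "fib I a = Icell I (ECell e)" using fibcell[OF mid_in[OF et(2-4)]] by simp
      then show ?thesis using lm_sub[OF ends LM cel et(2,5)] VCell by simp
    qed
  next
    case (ECell e)
    then obtain t where t: "a = Mid e t" "0 < t" "t < 1" using a by auto
    have e: "e \<in> E" using c ECell by (auto simp: cells_def)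
    show ?thesis using fibcell[OF mid_in[OF e t(2,3)]] t ECell by simp
  qed
  have Wval: "\<psi>c (cell_of a) x = \<psi>c c x"
    if c: "c \<in> cells V E" and a: "a \<in> Wc E src tgt c" and x: "x \<in> fib I a" for c a x
  proof (cases c)
    case (VCell v)
    show ?thesis
    proof (cases "a = Vert v")
      case True then show ?thesis by (simp add: VCell)
    next
      case False
      then obtain e t where et: "a = Mid e t" "e \<in> E" "0 < t" "t < 1" "src e = v \<or> tgt e = v"
        using a VCell by auto
      then have "fib I a = Icell I (ECell e)" using fibcell[OF mid_in[OF et(2-4)]] by simp
      then show ?thesis using \<psi>edge[OF et(2,5)] x et(1) VCell by (simp add: \<psi>c_def)
    qed
  next
    case (ECell e)
    then obtain t where t: "a = Mid e t" using a by auto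
    then show ?thesis using ECell by simp
  qed
  define \<beta> where "\<beta> = (\<lambda>p\<in>I. \<psi>c (cell_of (snd p)) (fst p))"
  have \<beta>val: "\<beta> (x, a) = \<psi>c (cell_of a) x" if "(x, a) \<in> I" for x a
    using that by (simp add: \<beta>_def)
  have rep: "cellular_rep Gam TGam G TG V E src tgt I \<beta>"
    unfolding cellular_rep_def
  proof (intro conjI ballI allI impI)
    show "\<beta> \<in> extensional I" by (simp add: \<beta>_def)
  next
    fix a assume a: "a \<in> gpoints V E"
    have h: "\<psi>c (cell_of a) \<in> hom (Gam\<lparr>carrier := fib I a\<rparr>) G"
      using \<psi>cont[OF fibcell(2)[OF a]] fibcell(1)[OF a] by (simp add: cont_homs_def)
    show "(\<lambda>x. \<beta> (x, a)) \<in> hom (Gam\<lparr>carrier := fib I a\<rparr>) G"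
      by (rule hom_cong_sub[OF sub[OF a] h]) (simp add: \<beta>val fib_def)
  next
    fix a a' x assume a: "a \<in> gpoints V E" and a': "a' \<in> gpoints V E"
      and ca: "cell_of a = cell_of a'" and x: "x \<in> fib I a"
    have "fib I a = fib I a'" using cel a a' ca by blast
    then have "(x, a) \<in> I" "(x, a') \<in> I" using x by (auto simp: fib_def)
    then show "\<beta> (x, a) = \<beta> (x, a')" using ca by (simp add: \<beta>val)
  next
    let ?X = "subtopology (prod_topology TGam ?R) I"
    define T where "T c = (topspace TGam \<times> Wc E src tgt c) \<inter> I" for c
    show "continuous_map ?X TG \<beta>"
    proof (rule pasting_lemma[where I = "cells V E" and T = T and f = "\<lambda>c. \<beta>"])
      fix c assume c: "c \<in> cells V E"
      have "openin (prod_topology TGam ?R) (topspace TGam \<times> Wc E src tgt c)"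
        using Wc_open[OF ends c] by (simp add: openin_prod_Times_iff)
      then show "openin ?X (T c)" unfolding openin_subtopology T_def by blast
      have TI: "T c \<subseteq> I" by (auto simp: T_def)
      have eqt: "subtopology ?X (T c) = subtopology (prod_topology TGam ?R) (T c)"
        using TI by (simp add: subtopology_subtopology Int_absorb1)
      have fs: "continuous_map (subtopology (prod_topology TGam ?R) (T c)) (subtopology TGam (Icell I c)) fst"
        unfolding continuous_map_in_subtopology
      proof
        show "continuous_map (subtopology (prod_topology TGam ?R) (T c)) TGam fst"
          by (rule continuous_map_from_subtopology[OF continuous_map_fst])
        show "fst \<in> topspace (subtopology (prod_topology TGam ?R) (T c)) \<rightarrow> Icell I c"
        proof
          fix p assume "p \<in> topspace (subtopology (prod_topology TGam ?R) (T c))"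
          then obtain x a where p: "p = (x, a)" "(x, a) \<in> I" "a \<in> Wc E src tgt c" by (auto simp: T_def)
          then have "x \<in> fib I a" by (simp add: fib_def)
          then show "fst p \<in> Icell I c" using Wsub[OF c p(3)] p(1) by auto
        qed
      qed
      have "continuous_map (subtopology (prod_topology TGam ?R) (T c)) TG (\<psi>c c \<circ> fst)"
      proof -
        have pc: "continuous_map (subtopology TGam (Icell I c)) TG (\<psi>c c)"
          using \<psi>cont[OF c] by (simp add: cont_homs_def)
        show ?thesis by (rule continuous_map_compose[OF fs pc])
      qed
      then have "continuous_map (subtopology (prod_topology TGam ?R) (T c)) TG \<beta>"
      proof (rule continuous_map_eq)
        fix p assume "p \<in> topspace (subtopology (prod_topology TGam ?R) (T c))"
        then obtain x a where p: "p = (x, a)" "(x, a) \<in> I" "a \<in> Wc E src tgt c" by (auto simp: T_def)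
        then have "x \<in> fib I a" by (simp add: fib_def)
        then show "(\<psi>c c \<circ> fst) p = \<beta> p" using Wval[OF c p(3)] p \<beta>val by simp
      qed
      then show "continuous_map (subtopology ?X (T c)) TG \<beta>" using eqt by simp
    next
      fix p assume p: "p \<in> topspace ?X"
      then obtain x a where xa: "p = (x, a)" "x \<in> topspace TGam" "a \<in> gpoints V E" "(x, a) \<in> I"
        using topspace_realization[OF ends] by auto
      have "a \<in> Wc E src tgt (cell_of a)"
        using xa(3) by (auto simp: gpoints_def)
      then show "\<exists>j. j \<in> cells V E \<and> p \<in> T j \<and> \<beta> p = \<beta> p"
        using fibcell(2)[OF xa(3)] xa by (auto simp: T_def)
    qed auto
  qed
  have kr: "kappa_rep G V E I \<beta>' = b" if H: "\<beta>' \<in> rep_class G I \<beta>" for \<beta>'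
  proof -
    obtain g where g: "g \<in> carrier G" and \<beta>': "\<beta>' = (\<lambda>p\<in>I. g \<otimes>\<^bsub>G\<^esub> \<beta> p \<otimes>\<^bsub>G\<^esub> inv\<^bsub>G\<^esub> g)"
      using H by (auto simp: rep_class_def)
    show ?thesis
    proof (rule ext)
      fix c
      show "kappa_rep G V E I \<beta>' c = b c"
      proof (cases "c \<in> cells V E")
        case False then show ?thesis using bext by (simp add: kappa_rep_def extensional_def)
      next
        case True
        have "hom_class G (Icell I c) (\<lambda>x. \<beta>' (x, cell_pt c))
            = hom_class G (Icell I c) (\<lambda>x\<in>Icell I c. g \<otimes>\<^bsub>G\<^esub> \<psi>c c x \<otimes>\<^bsub>G\<^esub> inv\<^bsub>G\<^esub> g)"
        proof (rule hom_class_cong)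
          fix x assume "x \<in> Icell I c"
          then have "(x, cell_pt c) \<in> I" by (simp add: Icell_def fib_def)
          then show "\<beta>' (x, cell_pt c) = (\<lambda>x\<in>Icell I c. g \<otimes>\<^bsub>G\<^esub> \<psi>c c x \<otimes>\<^bsub>G\<^esub> inv\<^bsub>G\<^esub> g) x"
            using \<open>x \<in> Icell I c\<close> cpt(2)[OF True] by (simp add: \<beta>' \<beta>val)
        qed
        also have "\<dots> = hom_class G (Icell I c) (\<psi>c c)"
          by (rule hom_class_trans[OF grp contin[OF \<psi>cont[OF True]]]) (use g in \<open>auto simp: hom_class_def\<close>)
        also have "\<dots> = b c" by (rule bcls[OF True \<psi>in[OF True]])
        finally show ?thesis using True by (simp add: kappa_rep_def)
      qed
    qed
  qed
  have "rep_class G I \<beta> \<noteq> {}"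
    using grp by (auto simp: rep_class_def intro: monoid.one_closed group.is_monoid)
  then have "kappa_rep G V E I ` rep_class G I \<beta> = {b}" using kr by auto
  then have "kappa G V E I (rep_class G I \<beta>) = b" by (simp add: kappa_def)
  moreover have "rep_class G I \<beta> \<in> Rep_cellular Gam TGam G TG V E src tgt I"
    using rep by (simp add: Rep_cellular_def)
  ultimately show "b \<in> kappa G V E I ` Rep_cellular Gam TGam G TG V E src tgt I" by force
qed


end
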